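(* Assume Assumption A and that the design is strongly stable with limit $p^\star$. Let $N_1=\sum_{i=1}^NK_i$, $N_0=N-N_1$, and $$\widehat m_0^2=\frac{1}{\max\{N_0,1\}}\sum_{i=1}^N(1-K_i)Y_i^2,\qquad \widehat m_1^2=\frac{1}{\max\{N_1,1\}}\sum_{i=1}^NK_iY_i^2,$$ $$\widehat V^{\mathrm{IPW}}_{\mathrm{strong}}=\Big(\widehat m_0\sqrt{\tfrac{p^\star}{1-p^\star}}+\widehat m_1\sqrt{\tfrac{1-p^\star}{p^\star}}\Big)^2 ,$$ where $\widehat m_\ell=\sqrt{\widehat m_\ell^2}$. Then $\widehat m_0^2\xrightarrow{p}m_0^2$ and $\widehat m_1^2\xrightarrow{p}m_1^2$; moreover $\widehat V^{\mathrm{IPW}}_{\mathrm{strong}}$ converges in probability to $\big(m_0\sqrt{p^\star/(1-p^\star)}+m_1\sqrt{(1-p^\star)/p^\star}\big)^2$, which is $\ge V^{\mathrm{IPW}}_{\mathrm{strong}}:=m_0^2\frac{p^\star}{1-p^\star}+m_1^2\frac{1-p^\star}{p^\star}+2m_{01}$ (so the estimator is conservative), and $\widehat V^{\mathrm{IPW}}_{\mathrm{strong}}$ is consistent for $V^{\mathrm{IPW}}_{\mathrm{strong}}$ when the potential outcomes are additive on the log scale, i.e. $Y_i(1)=cY_i(0)$ for all $i$ for some constant $c\in\mathbb R$.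
   Context: Setup. Let $(Y_i(0),Y_i(1))_{i\ge1}$ be a fixed (non-random) sequence of pairs of real numbers (potential outcomes under control and treatment). For each $N$ the experiment consists of units $1,\dots,N$. Random treatment indicators $K_1,K_2,\dots\in\{0,1\}$ are assigned sequentially and the observed outcome is $Y_i=K_iY_i(1)+(1-K_i)Y_i(0)$. Let $\mathcal F_0$ be the trivial $\sigma$-field and $\mathcal F_{i-1}=\sigma(K_1,Y_1,\dots,K_{i-1},Y_{i-1})$. A sequential design is a sequence of random variables $(p_i)_{i\ge1}$ (inclusion probabilities) such that $p_i$ is $\mathcal F_{i-1}$-measurable and $\mathbb P(K_i=1\mid\mathcal F_{i-1})=p_i$. Strong design stability: there is a non-random $p^\star\in(0,1)$ with $p_i\xrightarrow{p}p^\star$ as $i\to\infty$. Assumption A: (a) there is $\delta\in(0,1)$ with $p_i\in[\delta,1-\delta]$ for all $i\ge1$; (b) there is $M>0$ with $|Y_i(\ell)|\le M$ for all $i\ge1$, $\ell\in\{0,1\}$; (c) the limits $m_0^2=\lim_N\frac1N\sum_{i=1}^NY_i(0)^2$, $m_1^2=\lim_N\frac1N\sum_{i=1}^NY_i(1)^2$, $m_{01}=\lim_N\frac1N\sum_{i=1}^NY_i(0)Y_i(1)$ exist, with $m_0^2,m_1^2>0$ and $m_{01}\in\mathbb R$; $m_\ell=\sqrt{m_\ell^2}$. *)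

theory Defs
  imports "HOL-Probability.Probability"
begin

definition obs :: "(nat \<Rightarrow> 'a \<Rightarrow> bool) \<Rightarrow> (nat \<Rightarrow> real) \<Rightarrow> (nat \<Rightarrow> real) \<Rightarrow> nat \<Rightarrow> 'a \<Rightarrow> real" where
  "obs K Y0 Y1 i \<omega> = (if K i \<omega> then Y1 i else Y0 i)"

definition hist :: "'a measure \<Rightarrow> (nat \<Rightarrow> 'a \<Rightarrow> bool) \<Rightarrow> (nat \<Rightarrow> real) \<Rightarrow> (nat \<Rightarrow> real) \<Rightarrow> nat \<Rightarrow> 'a measure" where
  "hist M K Y0 Y1 n = sigma (space M)
     {(\<lambda>\<omega>. (K j \<omega>, obs K Y0 Y1 j \<omega>)) -` A \<inter> space M | j A.
        1 \<le> j \<and> j \<le> n \<and> A \<in> sets (count_space UNIV \<Otimes>\<^sub>M (borel :: real measure))}"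

definition sequential_design :: "'a measure \<Rightarrow> (nat \<Rightarrow> 'a \<Rightarrow> bool) \<Rightarrow> (nat \<Rightarrow> real) \<Rightarrow> (nat \<Rightarrow> real)
    \<Rightarrow> (nat \<Rightarrow> 'a \<Rightarrow> real) \<Rightarrow> bool" where
  "sequential_design M K Y0 Y1 p \<longleftrightarrow>
     (\<forall>i\<ge>1. K i \<in> measurable M (count_space UNIV)
        \<and> p i \<in> borel_measurable (hist M K Y0 Y1 (i - 1))
        \<and> (AE \<omega> in M. real_cond_exp M (hist M K Y0 Y1 (i - 1))
                          (\<lambda>\<omega>. indicator {\<omega>. K i \<omega>} \<omega>) \<omega> = p i \<omega>))"

definition conv_in_prob :: "'a measure \<Rightarrow> (nat \<Rightarrow> 'a \<Rightarrow> real) \<Rightarrow> real \<Rightarrow> bool" where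
  "conv_in_prob M X c \<longleftrightarrow>
     (\<forall>\<epsilon>>0. (\<lambda>n. measure M {\<omega> \<in> space M. \<bar>X n \<omega> - c\<bar> > \<epsilon>}) \<longlonglongrightarrow> 0)"

definition N1 :: "(nat \<Rightarrow> 'a \<Rightarrow> bool) \<Rightarrow> nat \<Rightarrow> 'a \<Rightarrow> real" where
  "N1 K N \<omega> = (\<Sum>i=1..N. if K i \<omega> then 1 else 0)"

definition N0 :: "(nat \<Rightarrow> 'a \<Rightarrow> bool) \<Rightarrow> nat \<Rightarrow> 'a \<Rightarrow> real" where
  "N0 K N \<omega> = real N - N1 K N \<omega>"

definition m0hat_sq :: "(nat \<Rightarrow> 'a \<Rightarrow> bool) \<Rightarrow> (nat \<Rightarrow> real) \<Rightarrow> (nat \<Rightarrow> real) \<Rightarrow> nat \<Rightarrow> 'a \<Rightarrow> real" where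
  "m0hat_sq K Y0 Y1 N \<omega> =
     (\<Sum>i=1..N. (if K i \<omega> then 0 else 1) * (obs K Y0 Y1 i \<omega>)\<^sup>2) / max (N0 K N \<omega>) 1"

definition m1hat_sq :: "(nat \<Rightarrow> 'a \<Rightarrow> bool) \<Rightarrow> (nat \<Rightarrow> real) \<Rightarrow> (nat \<Rightarrow> real) \<Rightarrow> nat \<Rightarrow> 'a \<Rightarrow> real" where
  "m1hat_sq K Y0 Y1 N \<omega> =
     (\<Sum>i=1..N. (if K i \<omega> then 1 else 0) * (obs K Y0 Y1 i \<omega>)\<^sup>2) / max (N1 K N \<omega>) 1"

definition Vhat_strong :: "(nat \<Rightarrow> 'a \<Rightarrow> bool) \<Rightarrow> (nat \<Rightarrow> real) \<Rightarrow> (nat \<Rightarrow> real) \<Rightarrow> real \<Rightarrow> nat \<Rightarrow> 'a \<Rightarrow> real" where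
  "Vhat_strong K Y0 Y1 ps N \<omega> =
     (sqrt (m0hat_sq K Y0 Y1 N \<omega>) * sqrt (ps / (1 - ps))
      + sqrt (m1hat_sq K Y0 Y1 N \<omega>) * sqrt ((1 - ps) / ps))\<^sup>2"

end

theory Submission
  imports Defs
begin

lemma cesaro0:
  fixes e :: "nat \<Rightarrow> real"
  assumes "e \<longlonglongrightarrow> 0" and nn: "\<And>i. 0 \<le> e i"
  shows "(\<lambda>N. (\<Sum>i=1..N. e i) / real N) \<longlonglongrightarrow> 0"
proof (rule LIMSEQ_I)
  fix r :: real assume r: "r > 0"
  have "\<exists>n0. \<forall>i\<ge>n0. e i < r/2"
    using LIMSEQ_D[OF assms(1), of "r/2"] r nn by auto
  then obtain n0 where n0: "\<And>i. i \<ge> n0 \<Longrightarrow> e i < r/2" by blast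
  define C where "C = (\<Sum>i=1..n0. e i)"
  have C0: "C \<ge> 0" unfolding C_def by (intro sum_nonneg nn)
  obtain n1 :: nat where n1: "n1 > 2 * C / r" using reals_Archimedean2 by blast
  show "\<exists>no. \<forall>N\<ge>no. norm ((\<Sum>i=1..N. e i) / real N - 0) < r"
  proof (intro exI allI impI)
    fix N assume N: "N \<ge> max (Suc n1) n0"
    then have Npos: "real N > 0" by simp
    have split: "(\<Sum>i=1..N. e i) = C + (\<Sum>i\<in>{n0<..N}. e i)"
    proof -
      have "{1..N} = {1..n0} \<union> {n0<..N}" using N by auto
      then show ?thesis unfolding C_def by (simp add: sum.union_disjoint ivl_disj_int)
    qed
    have "(\<Sum>i\<in>{n0<..N}. e i) \<le> (\<Sum>i\<in>{n0<..N}. r/2)"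
      proof (intro sum_mono) fix i assume "i \<in> {n0<..N}" then have "e i < r/2" using n0 by simp then show "e i \<le> r/2" by simp qed
    also have "\<dots> = real (N - n0) * (r/2)" by simp
    also have "\<dots> \<le> real N * (r/2)" using r by (intro mult_right_mono) auto
    finally have s2: "(\<Sum>i\<in>{n0<..N}. e i) \<le> real N * (r/2)" .
    have Cl: "C < real N * (r/2)"
    proof -
      have "2 * C / r < real N" using n1 N by linarith
      then have "2 * C < real N * r" using r by (simp add: divide_less_eq)
      then show ?thesis by simp
    qed
    have S0: "(\<Sum>i=1..N. e i) \<ge> 0" by (intro sum_nonneg nn)
    have "(\<Sum>i=1..N. e i) < real N * r" using split s2 Cl by linarith
    then have "(\<Sum>i=1..N. e i) / real N < r" using Npos by (simp add: divide_less_eq mult.commute)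
    then show "norm ((\<Sum>i=1..N. e i) / real N - 0) < r" using S0 Npos by simp
  qed
qed

lemma cip_comb:
  fixes X Y Z :: "nat \<Rightarrow> 'a \<Rightarrow> real"
  assumes P: "prob_space M"
    and mX: "\<And>n. X n \<in> borel_measurable M" and mY: "\<And>n. Y n \<in> borel_measurable M"
    and cX: "conv_in_prob M X a" and cY: "conv_in_prob M Y b"
    and H: "\<And>\<epsilon>. \<epsilon> > 0 \<Longrightarrow> \<exists>\<eta>>0. eventually (\<lambda>n. \<forall>\<omega>\<in>space M.
               \<bar>X n \<omega> - a\<bar> \<le> \<eta> \<longrightarrow> \<bar>Y n \<omega> - b\<bar> \<le> \<eta> \<longrightarrow> \<bar>Z n \<omega> - c\<bar> \<le> \<epsilon>) sequentially"
  shows "conv_in_prob M Z c"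
  unfolding conv_in_prob_def
proof (intro allI impI)
  fix \<epsilon> :: real assume e: "\<epsilon> > 0"
  interpret prob_space M by fact
  note [measurable] = mX mY
  obtain \<eta> where eta: "\<eta> > 0" and ev: "eventually (\<lambda>n. \<forall>\<omega>\<in>space M.
               \<bar>X n \<omega> - a\<bar> \<le> \<eta> \<longrightarrow> \<bar>Y n \<omega> - b\<bar> \<le> \<eta> \<longrightarrow> \<bar>Z n \<omega> - c\<bar> \<le> \<epsilon>) sequentially"
    using H[OF e] by blast
  let ?PX = "\<lambda>n. measure M {\<omega> \<in> space M. \<bar>X n \<omega> - a\<bar> > \<eta>}"
  let ?PY = "\<lambda>n. measure M {\<omega> \<in> space M. \<bar>Y n \<omega> - b\<bar> > \<eta>}"
  have tX: "?PX \<longlonglongrightarrow> 0" using cX eta unfolding conv_in_prob_def by blast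
  have tY: "?PY \<longlonglongrightarrow> 0" using cY eta unfolding conv_in_prob_def by blast
  have t: "(\<lambda>n. ?PX n + ?PY n) \<longlonglongrightarrow> 0" using tendsto_add[OF tX tY] by simp
  show "(\<lambda>n. measure M {\<omega> \<in> space M. \<bar>Z n \<omega> - c\<bar> > \<epsilon>}) \<longlonglongrightarrow> 0"
  proof (rule tendsto_sandwich[OF _ _ tendsto_const t])
    show "eventually (\<lambda>n. 0 \<le> measure M {\<omega> \<in> space M. \<bar>Z n \<omega> - c\<bar> > \<epsilon>}) sequentially"
      by simp
    show "eventually (\<lambda>n. measure M {\<omega> \<in> space M. \<bar>Z n \<omega> - c\<bar> > \<epsilon>} \<le> ?PX n + ?PY n) sequentially"
      using ev
    proof eventually_elim
      case (elim n)
      have sX: "{\<omega> \<in> space M. \<bar>X n \<omega> - a\<bar> > \<eta>} \<in> sets M" by measurable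
      have sY: "{\<omega> \<in> space M. \<bar>Y n \<omega> - b\<bar> > \<eta>} \<in> sets M" by measurable
      have sub: "{\<omega> \<in> space M. \<bar>Z n \<omega> - c\<bar> > \<epsilon>} \<subseteq> {\<omega> \<in> space M. \<bar>X n \<omega> - a\<bar> > \<eta>} \<union> {\<omega> \<in> space M. \<bar>Y n \<omega> - b\<bar> > \<eta>}"
      proof
        fix \<omega> assume w: "\<omega> \<in> {\<omega> \<in> space M. \<bar>Z n \<omega> - c\<bar> > \<epsilon>}"
        then have w1: "\<omega> \<in> space M" and w2: "\<bar>Z n \<omega> - c\<bar> > \<epsilon>" by auto
        have "\<not> (\<bar>X n \<omega> - a\<bar> \<le> \<eta> \<and> \<bar>Y n \<omega> - b\<bar> \<le> \<eta>)"
        proof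
          assume "\<bar>X n \<omega> - a\<bar> \<le> \<eta> \<and> \<bar>Y n \<omega> - b\<bar> \<le> \<eta>"
          then have "\<bar>Z n \<omega> - c\<bar> \<le> \<epsilon>" using elim w1 by blast
          then show False using w2 by linarith
        qed
        then show "\<omega> \<in> {\<omega> \<in> space M. \<bar>X n \<omega> - a\<bar> > \<eta>} \<union> {\<omega> \<in> space M. \<bar>Y n \<omega> - b\<bar> > \<eta>}"
          using w1 by auto
      qed
      show ?case
      proof (cases "{\<omega> \<in> space M. \<bar>Z n \<omega> - c\<bar> > \<epsilon>} \<in> sets M")
        case True
        have "measure M {\<omega> \<in> space M. \<bar>Z n \<omega> - c\<bar> > \<epsilon>} \<le> measure M ({\<omega> \<in> space M. \<bar>X n \<omega> - a\<bar> > \<eta>} \<union> {\<omega> \<in> space M. \<bar>Y n \<omega> - b\<bar> > \<eta>})"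
          by (rule finite_measure_mono[OF sub]) (use sX sY in auto)
        also have "\<dots> \<le> ?PX n + ?PY n" by (rule measure_Un_le[OF sX sY])
        finally show ?thesis .
      next
        case False
        then show ?thesis by (simp add: measure_notin_sets add_nonneg_nonneg)
      qed
    qed
  qed
qed

lemma cip_det:
  assumes "f \<longlonglongrightarrow> L"
  shows "conv_in_prob M (\<lambda>n \<omega>. f n) L"
  unfolding conv_in_prob_def
proof (intro allI impI)
  fix \<epsilon> :: real assume e: "\<epsilon> > 0"
  have "eventually (\<lambda>n. dist (f n) L < \<epsilon>) sequentially" using assms e tendstoD by blast
  then have "eventually (\<lambda>n. measure M {\<omega> \<in> space M. \<bar>f n - L\<bar> > \<epsilon>} = 0) sequentially"
    by eventually_elim (simp add: dist_real_def)
  then show "(\<lambda>n. measure M {\<omega> \<in> space M. \<bar>f n - L\<bar> > \<epsilon>}) \<longlonglongrightarrow> 0"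
    by (rule tendsto_eventually)
qed


lemma cip_add:
  fixes X Y :: "nat \<Rightarrow> 'a \<Rightarrow> real"
  assumes P: "prob_space M"
    and mX: "\<And>n. X n \<in> borel_measurable M" and mY: "\<And>n. Y n \<in> borel_measurable M"
    and cX: "conv_in_prob M X a" and cY: "conv_in_prob M Y b"
  shows "conv_in_prob M (\<lambda>n \<omega>. X n \<omega> + Y n \<omega>) (a + b)"
proof (rule cip_comb[OF P mX mY cX cY])
  fix \<epsilon> :: real assume e: "\<epsilon> > 0"
  show "\<exists>\<eta>>0. eventually (\<lambda>n. \<forall>\<omega>\<in>space M.
               \<bar>X n \<omega> - a\<bar> \<le> \<eta> \<longrightarrow> \<bar>Y n \<omega> - b\<bar> \<le> \<eta> \<longrightarrow> \<bar>X n \<omega> + Y n \<omega> - (a + b)\<bar> \<le> \<epsilon>) sequentially"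
  proof (intro exI[of _ "\<epsilon>/2"] conjI always_eventually ballI impI allI)
    show "\<epsilon>/2 > 0" using e by simp
    fix n \<omega> assume "\<bar>X n \<omega> - a\<bar> \<le> \<epsilon>/2" "\<bar>Y n \<omega> - b\<bar> \<le> \<epsilon>/2"
    then show "\<bar>X n \<omega> + Y n \<omega> - (a + b)\<bar> \<le> \<epsilon>" by linarith
  qed
qed

lemma cip_cong:
  fixes W Z :: "nat \<Rightarrow> 'a \<Rightarrow> real"
  assumes P: "prob_space M" and mW: "\<And>n. W n \<in> borel_measurable M"
    and cW: "conv_in_prob M W c"
    and eq: "\<And>n \<omega>. 1 \<le> n \<Longrightarrow> \<omega> \<in> space M \<Longrightarrow> Z n \<omega> = W n \<omega>"
  shows "conv_in_prob M Z c"
proof (rule cip_comb[OF P mW mW cW cW])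
  fix \<epsilon> :: real assume e: "\<epsilon> > 0"
  show "\<exists>\<eta>>0. eventually (\<lambda>n. \<forall>\<omega>\<in>space M.
               \<bar>W n \<omega> - c\<bar> \<le> \<eta> \<longrightarrow> \<bar>W n \<omega> - c\<bar> \<le> \<eta> \<longrightarrow> \<bar>Z n \<omega> - c\<bar> \<le> \<epsilon>) sequentially"
    by (rule exI[of _ \<epsilon>]) (use e eq in \<open>auto intro!: eventually_sequentiallyI[of 1]\<close>)
qed

lemma cont_eta:
  fixes f :: "real \<times> real \<Rightarrow> real"
  assumes c: "isCont f (a, b)" and e: "\<epsilon> > 0"
  shows "\<exists>\<eta>>0. \<forall>x y. \<bar>x - a\<bar> \<le> \<eta> \<longrightarrow> \<bar>y - b\<bar> \<le> \<eta> \<longrightarrow> \<bar>f (x, y) - f (a, b)\<bar> \<le> \<epsilon>"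
proof -
  obtain d where d: "d > 0" and H: "\<And>z. dist z (a, b) < d \<Longrightarrow> dist (f z) (f (a, b)) < \<epsilon>"
    using c e unfolding continuous_at_eps_delta by blast
  show ?thesis
  proof (intro exI[of _ "d/3"] conjI allI impI)
    show "d/3 > 0" using d by simp
    fix x y assume x: "\<bar>x - a\<bar> \<le> d/3" and y: "\<bar>y - b\<bar> \<le> d/3"
    have "dist (x, y) (a, b) = norm (x - a, y - b)" by (simp add: dist_norm)
    also have "\<dots> \<le> norm (x - a) + norm (y - b)" by (rule norm_Pair_le)
    also have "\<dots> < d" using x y d by simp
    finally have "dist (f (x, y)) (f (a, b)) < \<epsilon>" by (rule H)
    then show "\<bar>f (x, y) - f (a, b)\<bar> \<le> \<epsilon>" by (simp add: dist_real_def)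
  qed
qed


lemma cip_diff:
  fixes X Y :: "nat \<Rightarrow> 'a \<Rightarrow> real"
  assumes P: "prob_space M"
    and mX: "\<And>n. X n \<in> borel_measurable M" and mY: "\<And>n. Y n \<in> borel_measurable M"
    and cX: "conv_in_prob M X a" and cY: "conv_in_prob M Y b"
  shows "conv_in_prob M (\<lambda>n \<omega>. X n \<omega> - Y n \<omega>) (a - b)"
proof (rule cip_comb[OF P mX mY cX cY])
  fix \<epsilon> :: real assume e: "\<epsilon> > 0"
  show "\<exists>\<eta>>0. eventually (\<lambda>n. \<forall>\<omega>\<in>space M.
               \<bar>X n \<omega> - a\<bar> \<le> \<eta> \<longrightarrow> \<bar>Y n \<omega> - b\<bar> \<le> \<eta> \<longrightarrow> \<bar>X n \<omega> - Y n \<omega> - (a - b)\<bar> \<le> \<epsilon>) sequentially"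
  proof (intro exI[of _ "\<epsilon>/2"] conjI always_eventually ballI impI allI)
    show "\<epsilon>/2 > 0" using e by simp
    fix n \<omega> assume "\<bar>X n \<omega> - a\<bar> \<le> \<epsilon>/2" "\<bar>Y n \<omega> - b\<bar> \<le> \<epsilon>/2"
    then show "\<bar>X n \<omega> - Y n \<omega> - (a - b)\<bar> \<le> \<epsilon>" by linarith
  qed
qed

lemma cip_ratio:
  fixes X R Z :: "nat \<Rightarrow> 'a \<Rightarrow> real"
  assumes P: "prob_space M"
    and mX: "\<And>n. X n \<in> borel_measurable M" and mR: "\<And>n. R n \<in> borel_measurable M"
    and cX: "conv_in_prob M X (q * m)" and cR: "conv_in_prob M R q" and q: "q > 0"
    and eq: "\<And>N \<omega>. 1 \<le> N \<Longrightarrow> \<omega> \<in> space M \<Longrightarrow> Z N \<omega> = X N \<omega> * real N / max (R N \<omega> * real N) 1"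
  shows "conv_in_prob M Z m"
proof (rule cip_comb[OF P mX mR cX cR])
  fix \<epsilon> :: real assume e: "\<epsilon> > 0"
  have "isCont (\<lambda>z::real \<times> real. fst z / snd z) (q * m, q)"
    using q by (intro continuous_intros) auto
  from cont_eta[OF this e] obtain \<eta>0 where eta0: "\<eta>0 > 0"
    and H: "\<And>x y. \<bar>x - q * m\<bar> \<le> \<eta>0 \<Longrightarrow> \<bar>y - q\<bar> \<le> \<eta>0 \<Longrightarrow> \<bar>x / y - q * m / q\<bar> \<le> \<epsilon>"
    by auto
  show "\<exists>\<eta>>0. eventually (\<lambda>n. \<forall>\<omega>\<in>space M.
               \<bar>X n \<omega> - q * m\<bar> \<le> \<eta> \<longrightarrow> \<bar>R n \<omega> - q\<bar> \<le> \<eta> \<longrightarrow> \<bar>Z n \<omega> - m\<bar> \<le> \<epsilon>) sequentially"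
  proof (intro exI[of _ "min \<eta>0 (q/2)"] conjI)
    show "min \<eta>0 (q/2) > 0" using eta0 q by simp
    show "eventually (\<lambda>n. \<forall>\<omega>\<in>space M.
               \<bar>X n \<omega> - q * m\<bar> \<le> min \<eta>0 (q/2) \<longrightarrow> \<bar>R n \<omega> - q\<bar> \<le> min \<eta>0 (q/2) \<longrightarrow> \<bar>Z n \<omega> - m\<bar> \<le> \<epsilon>) sequentially"
      using eventually_ge_at_top[of "nat \<lceil>2 / q\<rceil> + 1"]
    proof eventually_elim
      case (elim N)
      have N1: "1 \<le> N" using elim by simp
      have Nq: "real N > 2 / q" using elim by linarith
      show ?case
      proof (intro ballI impI)
        fix \<omega> assume w: "\<omega> \<in> space M" and x: "\<bar>X N \<omega> - q * m\<bar> \<le> min \<eta>0 (q/2)"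
          and y: "\<bar>R N \<omega> - q\<bar> \<le> min \<eta>0 (q/2)"
        have Rq: "R N \<omega> \<ge> q/2" using y by linarith
        have "R N \<omega> * real N \<ge> q/2 * real N" using Rq by (intro mult_right_mono) auto
        moreover have "q/2 * real N > 1" using Nq q by (simp add: divide_less_eq mult.commute)
        ultimately have big: "R N \<omega> * real N > 1" by linarith
        have "Z N \<omega> = X N \<omega> * real N / (R N \<omega> * real N)" using eq[OF N1 w] big by simp
        also have "\<dots> = X N \<omega> / R N \<omega>" using N1 by simp
        finally have "Z N \<omega> = X N \<omega> / R N \<omega>" .
        moreover have "\<bar>X N \<omega> / R N \<omega> - q * m / q\<bar> \<le> \<epsilon>" using H x y by simp
        ultimately show "\<bar>Z N \<omega> - m\<bar> \<le> \<epsilon>" using q by simp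
      qed
    qed
  qed
qed

lemma expand_V:
  fixes m0 m1 ps :: real
  assumes "0 < ps" "ps < 1" "0 \<le> m0" "0 \<le> m1"
  shows "(sqrt m0 * sqrt (ps / (1 - ps)) + sqrt m1 * sqrt ((1 - ps) / ps))\<^sup>2
       = m0 * (ps / (1 - ps)) + m1 * ((1 - ps) / ps) + 2 * sqrt (m0 * m1)"
proof -
  have ab: "sqrt (ps / (1 - ps)) * sqrt ((1 - ps) / ps) = 1"
    using assms by (simp add: real_sqrt_mult[symmetric])
  have a2: "(sqrt (ps / (1 - ps)))\<^sup>2 = ps / (1 - ps)" using assms by simp
  have b2: "(sqrt ((1 - ps) / ps))\<^sup>2 = (1 - ps) / ps" using assms by simp
  have "(sqrt m0 * sqrt (ps / (1 - ps)) + sqrt m1 * sqrt ((1 - ps) / ps))\<^sup>2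
      = (sqrt m0)\<^sup>2 * (sqrt (ps / (1 - ps)))\<^sup>2 + (sqrt m1)\<^sup>2 * (sqrt ((1 - ps) / ps))\<^sup>2
        + 2 * (sqrt m0 * sqrt m1) * (sqrt (ps / (1 - ps)) * sqrt ((1 - ps) / ps))"
    by (simp add: power2_eq_square algebra_simps)
  also have "\<dots> = m0 * (ps / (1 - ps)) + m1 * ((1 - ps) / ps) + 2 * sqrt (m0 * m1)"
    using assms by (simp only: ab a2 b2 real_sqrt_mult[symmetric]) simp
  finally show ?thesis .
qed

lemma cs_limit:
  fixes Y0 Y1 :: "nat \<Rightarrow> real"
  assumes "(\<lambda>N. (\<Sum>i=1..N. (Y0 i)\<^sup>2) / real N) \<longlonglongrightarrow> m0sq"
          "(\<lambda>N. (\<Sum>i=1..N. (Y1 i)\<^sup>2) / real N) \<longlonglongrightarrow> m1sq"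
          "(\<lambda>N. (\<Sum>i=1..N. Y0 i * Y1 i) / real N) \<longlonglongrightarrow> m01"
  shows "m01\<^sup>2 \<le> m0sq * m1sq"
proof (rule LIMSEQ_le)
  show "(\<lambda>N. ((\<Sum>i=1..N. Y0 i * Y1 i) / real N)\<^sup>2) \<longlonglongrightarrow> m01\<^sup>2"
    by (intro tendsto_power assms(3))
  show "(\<lambda>N. ((\<Sum>i=1..N. (Y0 i)\<^sup>2) / real N) * ((\<Sum>i=1..N. (Y1 i)\<^sup>2) / real N)) \<longlonglongrightarrow> m0sq * m1sq"
    by (intro tendsto_mult assms(1,2))
  show "\<exists>N0. \<forall>N\<ge>N0. ((\<Sum>i=1..N. Y0 i * Y1 i) / real N)\<^sup>2 \<le> ((\<Sum>i=1..N. (Y0 i)\<^sup>2) / real N) * ((\<Sum>i=1..N. (Y1 i)\<^sup>2) / real N)"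
  proof (intro exI allI impI)
    fix N :: nat
    have "(\<Sum>i=1..N. Y0 i * Y1 i)\<^sup>2 \<le> (\<Sum>i=1..N. (Y0 i)\<^sup>2) * (\<Sum>i=1..N. (Y1 i)\<^sup>2)"
      by (rule Cauchy_Schwarz_ineq_sum)
    then have "(\<Sum>i=1..N. Y0 i * Y1 i)\<^sup>2 / (real N)\<^sup>2 \<le> (\<Sum>i=1..N. (Y0 i)\<^sup>2) * (\<Sum>i=1..N. (Y1 i)\<^sup>2) / (real N)\<^sup>2"
      by (rule divide_right_mono) simp
    then show "((\<Sum>i=1..N. Y0 i * Y1 i) / real N)\<^sup>2 \<le> ((\<Sum>i=1..N. (Y0 i)\<^sup>2) / real N) * ((\<Sum>i=1..N. (Y1 i)\<^sup>2) / real N)"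
      by (simp add: power_divide power2_eq_square)
  qed
qed

locale dctx = prob_space M for M :: "'a measure" +
  fixes K :: "nat \<Rightarrow> 'a \<Rightarrow> bool" and Y0 Y1 :: "nat \<Rightarrow> real" and p :: "nat \<Rightarrow> 'a \<Rightarrow> real" and ps :: real
  assumes design: "sequential_design M K Y0 Y1 p"
    and pb: "\<And>i \<omega>. 1 \<le> i \<Longrightarrow> \<omega> \<in> space M \<Longrightarrow> 0 \<le> p i \<omega> \<and> p i \<omega> \<le> 1"
    and ps01: "0 \<le> ps" "ps \<le> 1"
    and cp: "conv_in_prob M p ps"
begin

abbreviation "H n \<equiv> hist M K Y0 Y1 n"

definition gens :: "nat \<Rightarrow> 'a set set" where
  "gens n = {(\<lambda>\<omega>. (K j \<omega>, obs K Y0 Y1 j \<omega>)) -` A \<inter> space M | j A.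
        1 \<le> j \<and> j \<le> n \<and> A \<in> sets (count_space UNIV \<Otimes>\<^sub>M (borel :: real measure))}"

lemma Kmeas: "1 \<le> i \<Longrightarrow> K i \<in> M \<rightarrow>\<^sub>M count_space UNIV"
  using design unfolding sequential_design_def by blast

lemma pair_meas: "1 \<le> j \<Longrightarrow> (\<lambda>\<omega>. (K j \<omega>, obs K Y0 Y1 j \<omega>)) \<in> M \<rightarrow>\<^sub>M (count_space UNIV \<Otimes>\<^sub>M (borel :: real measure))"
proof -
  assume j: "1 \<le> j"
  have o: "obs K Y0 Y1 j = (\<lambda>\<omega>. (\<lambda>b. if b then Y1 j else Y0 j) (K j \<omega>))"
    by (auto simp: obs_def)
  have "(\<lambda>\<omega>. (\<lambda>b. if b then Y1 j else Y0 j) (K j \<omega>)) \<in> borel_measurable M"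
    by (rule measurable_compose[OF Kmeas[OF j]]) simp
  then show ?thesis using Kmeas[OF j] unfolding o by measurable
qed

lemma gens_sub: "gens n \<subseteq> sets M"
  unfolding gens_def using pair_meas measurable_sets by blast

lemma gens_pow: "gens n \<subseteq> Pow (space M)"
  unfolding gens_def by auto

lemma hist_eq: "H n = sigma (space M) (gens n)"
  unfolding hist_def gens_def by simp

lemma space_H: "space (H n) = space M"
  unfolding hist_eq by (simp add: space_measure_of_conv)

lemma sets_H: "sets (H n) = sigma_sets (space M) (gens n)"
  unfolding hist_eq using gens_pow by (simp add: sets_measure_of)

lemma subalg: "subalgebra M (H n)"
  unfolding subalgebra_def space_H sets_H
  using sets.sigma_sets_subset[OF gens_sub] by simp

lemma gens_mono: "m \<le> n \<Longrightarrow> gens m \<subseteq> gens n"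
  unfolding gens_def by fastforce

lemma subalg_mono: "m \<le> n \<Longrightarrow> subalgebra (H n) (H m)"
  unfolding subalgebra_def space_H sets_H
  using sigma_sets_mono'[OF gens_mono] by simp

lemma ind_H: "1 \<le> i \<Longrightarrow> i \<le> n \<Longrightarrow> (\<lambda>\<omega>. if K i \<omega> then 1 else 0 :: real) \<in> borel_measurable (H n)"
proof -
  assume i: "1 \<le> i" "i \<le> n"
  have "(\<lambda>\<omega>. (K i \<omega>, obs K Y0 Y1 i \<omega>)) -` ({True} \<times> UNIV) \<inter> space M \<in> gens n"
    unfolding gens_def using i by (intro CollectI exI[of _ i] exI[of _ "{True} \<times> UNIV"]) (auto intro: pair_measureI)
  then have "(\<lambda>\<omega>. (K i \<omega>, obs K Y0 Y1 i \<omega>)) -` ({True} \<times> UNIV) \<inter> space M \<in> sets (H n)"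
    unfolding sets_H by auto
  moreover have "(\<lambda>\<omega>. (K i \<omega>, obs K Y0 Y1 i \<omega>)) -` ({True} \<times> UNIV) \<inter> space M = {\<omega> \<in> space (H n). K i \<omega>}"
    unfolding space_H by auto
  ultimately have s: "{\<omega> \<in> space (H n). K i \<omega>} \<in> sets (H n)" by simp
  show ?thesis by (rule measurable_If[OF _ _ s]) auto
qed

lemma ind_M: "1 \<le> i \<Longrightarrow> (\<lambda>\<omega>. if K i \<omega> then 1 else 0 :: real) \<in> borel_measurable M"
  using measurable_from_subalg[OF subalg ind_H] by blast

lemma p_H: "1 \<le> i \<Longrightarrow> i \<le> Suc n \<Longrightarrow> p i \<in> borel_measurable (H n)"
proof -
  assume i: "1 \<le> i" "i \<le> Suc n"
  have "p i \<in> borel_measurable (H (i - 1))" using design i unfolding sequential_design_def by blast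
  then show ?thesis using measurable_from_subalg[OF subalg_mono] i by (metis diff_le_mono diff_Suc_1)
qed

lemma p_M: "1 \<le> i \<Longrightarrow> p i \<in> borel_measurable M"
  using measurable_from_subalg[OF subalg p_H] by (metis le_SucI order_refl)

lemma orth:
  assumes j: "1 \<le> j" and g: "g \<in> borel_measurable (H (j - 1))" and gb: "\<And>\<omega>. \<omega> \<in> space M \<Longrightarrow> \<bar>g \<omega>\<bar> \<le> C"
  shows "(\<integral>\<omega>. g \<omega> * ((if K j \<omega> then 1 else 0) - p j \<omega>) \<partial>M) = 0"
proof -
  interpret S: finite_measure_subalgebra M "H (j - 1)"
    by unfold_locales (rule subalg)
  have gM: "g \<in> borel_measurable M" using measurable_from_subalg[OF subalg g] .
  have iM: "(\<lambda>\<omega>. indicator {\<omega>. K j \<omega>} \<omega> :: real) \<in> borel_measurable M"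
  proof -
    have "(\<lambda>\<omega>. indicator {\<omega>. K j \<omega>} \<omega> :: real) = (\<lambda>\<omega>. if K j \<omega> then 1 else 0)"
      by (auto simp: indicator_def)
    then show ?thesis using ind_M[OF j] by simp
  qed
  have ae: "AE \<omega> in M. real_cond_exp M (H (j - 1)) (\<lambda>\<omega>. indicator {\<omega>. K j \<omega>} \<omega>) \<omega> = p j \<omega>"
    using design j unfolding sequential_design_def by blast
  have C0: "0 \<le> C"
  proof -
    obtain x where "x \<in> space M" using not_empty by blast
    then show ?thesis using gb[of x] by linarith
  qed
  have int1: "integrable M (\<lambda>\<omega>. g \<omega> * indicator {\<omega>. K j \<omega>} \<omega>)"
  proof (rule integrable_const_bound[where B=C])
    show "AE x in M. norm (g x * indicator {\<omega>. K j \<omega>} x) \<le> C"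
    proof (rule AE_I2)
      fix x assume x: "x \<in> space M"
      have "\<bar>g x\<bar> * indicator {\<omega>. K j \<omega>} x \<le> C * 1" using gb[OF x] C0 by (intro mult_mono) (auto simp: indicator_def)
      then show "norm (g x * indicator {\<omega>. K j \<omega>} x) \<le> C" by (simp add: abs_mult)
    qed
    show "(\<lambda>x. g x * indicator {\<omega>. K j \<omega>} x) \<in> borel_measurable M" using gM iM by measurable
  qed
  have int2: "integrable M (\<lambda>\<omega>. g \<omega> * p j \<omega>)"
  proof (rule integrable_const_bound[where B=C])
    show "AE x in M. norm (g x * p j x) \<le> C"
    proof (rule AE_I2)
      fix x assume x: "x \<in> space M"
      have "\<bar>g x\<bar> * \<bar>p j x\<bar> \<le> C * 1" using gb[OF x] pb[OF j x] by (intro mult_mono) auto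
      then show "norm (g x * p j x) \<le> C" by (simp add: abs_mult)
    qed
    show "(\<lambda>x. g x * p j x) \<in> borel_measurable M" using gM p_M[OF j] by measurable
  qed
  have "(\<integral>\<omega>. g \<omega> * indicator {\<omega>. K j \<omega>} \<omega> \<partial>M) = (\<integral>\<omega>. g \<omega> * real_cond_exp M (H (j - 1)) (\<lambda>\<omega>. indicator {\<omega>. K j \<omega>} \<omega>) \<omega> \<partial>M)"
    using S.real_cond_exp_intg(2)[OF int1 g iM] by simp
  also have "\<dots> = (\<integral>\<omega>. g \<omega> * p j \<omega> \<partial>M)"
    by (rule integral_cong_AE) (use ae gM iM S.real_cond_exp_intg(1)[OF int1 g iM] p_M[OF j] in auto)
  finally have eq: "(\<integral>\<omega>. g \<omega> * indicator {\<omega>. K j \<omega>} \<omega> \<partial>M) = (\<integral>\<omega>. g \<omega> * p j \<omega> \<partial>M)" .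
  have "(\<integral>\<omega>. g \<omega> * ((if K j \<omega> then 1 else 0) - p j \<omega>) \<partial>M)
      = (\<integral>\<omega>. g \<omega> * indicator {\<omega>. K j \<omega>} \<omega> - g \<omega> * p j \<omega> \<partial>M)"
    by (rule Bochner_Integration.integral_cong) (auto simp: indicator_def algebra_simps)
  also have "\<dots> = 0" using Bochner_Integration.integral_diff[OF int1 int2] eq by simp
  finally show ?thesis .
qed


lemma mart:
  fixes a :: "nat \<Rightarrow> real"
  assumes ab: "\<And>i. 1 \<le> i \<Longrightarrow> \<bar>a i\<bar> \<le> A"
  shows "conv_in_prob M (\<lambda>N \<omega>. (\<Sum>i=1..N. ((if K i \<omega> then 1 else 0) - p i \<omega>) * a i) / real N) 0"
proof -
  define D where "D i \<omega> = ((if K i \<omega> then 1 else 0) - p i \<omega>) * a i" for i \<omega>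
  have A0: "0 \<le> A" using ab[of 1] by simp
  have Dm: "D i \<in> borel_measurable M" if "1 \<le> i" for i
    unfolding D_def using ind_M[OF that] p_M[OF that] by measurable
  have DH: "D i \<in> borel_measurable (H n)" if "1 \<le> i" "i \<le> n" for i n
  proof -
    have "p i \<in> borel_measurable (H n)" using p_H[of i n] that by simp
    then show ?thesis unfolding D_def using ind_H[OF that] by measurable
  qed
  have Db: "\<bar>D i \<omega>\<bar> \<le> A" if "1 \<le> i" "\<omega> \<in> space M" for i \<omega>
  proof -
    have "\<bar>(if K i \<omega> then 1 else 0) - p i \<omega>\<bar> \<le> 1" using pb[OF that] by auto
    then have "\<bar>(if K i \<omega> then 1 else 0) - p i \<omega>\<bar> * \<bar>a i\<bar> \<le> 1 * A"
      using ab[OF that(1)] by (intro mult_mono) auto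
    then show ?thesis unfolding D_def by (simp add: abs_mult)
  qed
  have Dint: "integrable M (\<lambda>\<omega>. D i \<omega> * D j \<omega>)" if "1 \<le> i" "1 \<le> j" for i j
  proof (rule integrable_const_bound[where B="A*A"])
    show "AE x in M. norm (D i x * D j x) \<le> A * A"
    proof (rule AE_I2)
      fix x assume x: "x \<in> space M"
      have "\<bar>D i x\<bar> * \<bar>D j x\<bar> \<le> A * A" using Db[OF that(1) x] Db[OF that(2) x] A0 by (intro mult_mono) auto
      then show "norm (D i x * D j x) \<le> A * A" by (simp add: abs_mult)
    qed
    show "(\<lambda>x. D i x * D j x) \<in> borel_measurable M" using Dm[OF that(1)] Dm[OF that(2)] by measurable
  qed
  have cross: "(\<integral>\<omega>. D i \<omega> * D j \<omega> \<partial>M) = 0" if "1 \<le> i" "i < j" for i j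
  proof -
    have j: "1 \<le> j" using that by simp
    have "(\<integral>\<omega>. D i \<omega> * D j \<omega> \<partial>M) = (\<integral>\<omega>. (D i \<omega> * a j) * ((if K j \<omega> then 1 else 0) - p j \<omega>) \<partial>M)"
      unfolding D_def by (rule Bochner_Integration.integral_cong) (auto simp: algebra_simps)
    also have "\<dots> = 0"
    proof (rule orth[OF j])
      show "(\<lambda>\<omega>. D i \<omega> * a j) \<in> borel_measurable (H (j - 1))"
      proof -
        have "D i \<in> borel_measurable (H (j - 1))" using DH[of i "j - 1"] that by simp
        then show ?thesis by measurable
      qed
      fix \<omega> assume w: "\<omega> \<in> space M"
      show "\<bar>D i \<omega> * a j\<bar> \<le> A * A"
        using Db[OF that(1) w] ab[OF j] A0 by (simp add: abs_mult mult_mono)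
    qed
    finally show ?thesis .
  qed
  have diag: "(\<integral>\<omega>. D i \<omega> * D i \<omega> \<partial>M) \<le> A * A" if "1 \<le> i" for i
  proof -
    have "(\<integral>\<omega>. D i \<omega> * D i \<omega> \<partial>M) \<le> (\<integral>\<omega>. A * A \<partial>M)"
    proof (rule integral_mono[OF Dint[OF that that]])
      show "integrable M (\<lambda>\<omega>. A * A)" by simp
      fix \<omega> assume w: "\<omega> \<in> space M"
      have "\<bar>D i \<omega>\<bar> * \<bar>D i \<omega>\<bar> \<le> A * A" using Db[OF that w] A0 by (intro mult_mono) auto
      then show "D i \<omega> * D i \<omega> \<le> A * A" by (simp add: abs_mult[symmetric])
    qed
    then show ?thesis by (simp add: prob_space)
  qed
  have each: "(\<integral>\<omega>. D i \<omega> * D j \<omega> \<partial>M) \<le> (if i = j then A * A else 0)" if "1 \<le> i" "1 \<le> j" for i j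
  proof (cases "i = j")
    case True then show ?thesis using diag[OF that(1)] by simp
  next
    case False
    then have "i < j \<or> j < i" by arith
    then show ?thesis
    proof
      assume "i < j" then show ?thesis using cross[OF that(1)] False by simp
    next
      assume "j < i" then have "(\<integral>\<omega>. D j \<omega> * D i \<omega> \<partial>M) = 0" using cross[OF that(2)] by simp
      then show ?thesis using False by (simp add: mult.commute)
    qed
  qed
  have E: "(\<integral>\<omega>. (\<Sum>i=1..N. D i \<omega>)\<^sup>2 \<partial>M) \<le> real N * (A * A)" for N
  proof -
    have "(\<integral>\<omega>. (\<Sum>i=1..N. D i \<omega>)\<^sup>2 \<partial>M) = (\<integral>\<omega>. (\<Sum>i=1..N. \<Sum>j=1..N. D i \<omega> * D j \<omega>) \<partial>M)"
      by (simp add: power2_eq_square sum_product)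
    also have "\<dots> = (\<Sum>i=1..N. \<integral>\<omega>. (\<Sum>j=1..N. D i \<omega> * D j \<omega>) \<partial>M)"
      by (rule Bochner_Integration.integral_sum) (intro Bochner_Integration.integrable_sum, auto intro!: Dint)
    also have "\<dots> = (\<Sum>i=1..N. \<Sum>j=1..N. \<integral>\<omega>. D i \<omega> * D j \<omega> \<partial>M)"
      by (intro sum.cong refl Bochner_Integration.integral_sum) (auto intro!: Dint)
    also have "\<dots> \<le> (\<Sum>i=1..N. \<Sum>j=1..N. (if i = j then A * A else 0))"
      by (intro sum_mono each) auto
    also have "\<dots> = real N * (A * A)" by simp
    finally show ?thesis .
  qed
  have Sm: "(\<lambda>\<omega>. \<Sum>i=1..N. D i \<omega>) \<in> borel_measurable M" for N
    by (rule borel_measurable_sum) (use Dm in auto)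
  show ?thesis
    unfolding conv_in_prob_def
  proof (intro allI impI)
    fix \<epsilon> :: real assume e: "\<epsilon> > 0"
    have lim: "(\<lambda>N. (A * A / (\<epsilon> * \<epsilon>)) * inverse (real N)) \<longlonglongrightarrow> 0"
      using tendsto_mult[OF tendsto_const lim_inverse_n, of "A * A / (\<epsilon> * \<epsilon>)"] by simp
    show "(\<lambda>N. measure M {\<omega> \<in> space M. \<bar>(\<Sum>i=1..N. ((if K i \<omega> then 1 else 0) - p i \<omega>) * a i) / real N - 0\<bar> > \<epsilon>}) \<longlonglongrightarrow> 0"
    proof (rule tendsto_sandwich[OF _ _ tendsto_const lim])
      show "eventually (\<lambda>N. 0 \<le> measure M {\<omega> \<in> space M. \<bar>(\<Sum>i=1..N. ((if K i \<omega> then 1 else 0) - p i \<omega>) * a i) / real N - 0\<bar> > \<epsilon>}) sequentially"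
        by simp
      show "eventually (\<lambda>N. measure M {\<omega> \<in> space M. \<bar>(\<Sum>i=1..N. ((if K i \<omega> then 1 else 0) - p i \<omega>) * a i) / real N - 0\<bar> > \<epsilon>}
              \<le> (A * A / (\<epsilon> * \<epsilon>)) * inverse (real N)) sequentially"
        using eventually_ge_at_top[of 1]
      proof eventually_elim
        case (elim N)
        then have Np: "real N > 0" by simp
        let ?S = "\<lambda>\<omega>. \<Sum>i=1..N. D i \<omega>"
        have sub: "{\<omega> \<in> space M. \<bar>(\<Sum>i=1..N. ((if K i \<omega> then 1 else 0) - p i \<omega>) * a i) / real N - 0\<bar> > \<epsilon>}
            \<subseteq> {\<omega> \<in> space M. (?S \<omega>)\<^sup>2 \<ge> (real N * \<epsilon>)\<^sup>2}"
        proof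
          fix \<omega> assume "\<omega> \<in> {\<omega> \<in> space M. \<bar>(\<Sum>i=1..N. ((if K i \<omega> then 1 else 0) - p i \<omega>) * a i) / real N - 0\<bar> > \<epsilon>}"
          then have w: "\<omega> \<in> space M" and lt: "\<bar>?S \<omega> / real N\<bar> > \<epsilon>" by (auto simp: D_def)
          have "\<bar>?S \<omega>\<bar> / real N > \<epsilon>" using lt Np by simp
          then have "real N * \<epsilon> < \<bar>?S \<omega>\<bar>" using Np by (simp add: less_divide_eq mult.commute)
          then have "(real N * \<epsilon>)\<^sup>2 \<le> \<bar>?S \<omega>\<bar>\<^sup>2" using Np e by (intro power_mono) auto
          then show "\<omega> \<in> {\<omega> \<in> space M. (?S \<omega>)\<^sup>2 \<ge> (real N * \<epsilon>)\<^sup>2}" using w by simp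
        qed
        have intS: "integrable M (\<lambda>\<omega>. (?S \<omega>)\<^sup>2)"
        proof -
          have "integrable M (\<lambda>\<omega>. (\<Sum>i=1..N. \<Sum>j=1..N. D i \<omega> * D j \<omega>))"
            by (intro Bochner_Integration.integrable_sum) (auto intro!: Dint)
          then show ?thesis by (simp add: power2_eq_square sum_product)
        qed
        have "measure M {\<omega> \<in> space M. \<bar>(\<Sum>i=1..N. ((if K i \<omega> then 1 else 0) - p i \<omega>) * a i) / real N - 0\<bar> > \<epsilon>}
            \<le> measure M {\<omega> \<in> space M. (?S \<omega>)\<^sup>2 \<ge> (real N * \<epsilon>)\<^sup>2}"
          by (rule finite_measure_mono[OF sub]) (use Sm[of N] in measurable)
        also have "\<dots> \<le> (\<integral>\<omega>. (?S \<omega>)\<^sup>2 \<partial>M) / (real N * \<epsilon>)\<^sup>2"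
          by (rule integral_Markov_inequality_measure[OF intS, where A="space M"]) (use Np e in auto)
        also have "\<dots> \<le> (real N * (A * A)) / (real N * \<epsilon>)\<^sup>2"
          by (rule divide_right_mono[OF E]) simp
        also have "\<dots> = (A * A / (\<epsilon> * \<epsilon>)) * inverse (real N)"
          using Np e by (simp add: field_simps power2_eq_square)
        finally show ?case .
      qed
    qed
  qed
qed


lemma e_lim: "(\<lambda>i. \<integral>\<omega>. \<bar>p i \<omega> - ps\<bar> \<partial>M) \<longlonglongrightarrow> 0"
proof (rule LIMSEQ_I)
  fix r :: real assume r: "r > 0"
  have "(\<lambda>i. measure M {\<omega> \<in> space M. \<bar>p i \<omega> - ps\<bar> > r/2}) \<longlonglongrightarrow> 0"
    using cp half_gt_zero[OF r] unfolding conv_in_prob_def by blast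
  from LIMSEQ_D[OF this, of "r/2"] r obtain n0 where
    n0: "\<And>i. i \<ge> n0 \<Longrightarrow> norm (measure M {\<omega> \<in> space M. \<bar>p i \<omega> - ps\<bar> > r/2} - 0) < r/2" by auto
  show "\<exists>no. \<forall>i\<ge>no. norm ((\<integral>\<omega>. \<bar>p i \<omega> - ps\<bar> \<partial>M) - 0) < r"
  proof (intro exI allI impI)
    fix i assume i: "i \<ge> max 1 n0"
    then have i1: "1 \<le> i" by simp
    let ?A = "{\<omega> \<in> space M. \<bar>p i \<omega> - ps\<bar> > r/2}"
    have pm: "p i \<in> borel_measurable M" using p_M[OF i1] .
    have As: "?A \<in> sets M" using pm by measurable
    have mA: "measure M ?A < r/2" using n0[of i] i by simp
    have int1: "integrable M (\<lambda>\<omega>. \<bar>p i \<omega> - ps\<bar>)"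
    proof (rule integrable_const_bound[where B=1])
      show "AE x in M. norm \<bar>p i x - ps\<bar> \<le> 1" using pb[OF i1] ps01 by (intro AE_I2) fastforce
    qed (use pm in measurable)
    have int2: "integrable M (\<lambda>\<omega>. r/2 + indicator ?A \<omega>)"
      using As by (intro Bochner_Integration.integrable_add) (auto simp: integrable_indicator_iff less_top[symmetric])
    have "(\<integral>\<omega>. \<bar>p i \<omega> - ps\<bar> \<partial>M) \<le> (\<integral>\<omega>. r/2 + indicator ?A \<omega> \<partial>M)"
    proof (rule integral_mono[OF int1 int2])
      fix \<omega> assume w: "\<omega> \<in> space M"
      show "\<bar>p i \<omega> - ps\<bar> \<le> r/2 + indicator ?A \<omega>"
      proof (cases "\<omega> \<in> ?A")
        case True then show ?thesis using pb[OF i1 w] ps01 r by (auto simp: indicator_def)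
      next
        case False then show ?thesis using w by (auto simp: indicator_def)
      qed
    qed
    also have "\<dots> = r/2 + measure M ?A"
      using As by (subst Bochner_Integration.integral_add) (auto simp: integrable_indicator_iff prob_space emeasure_eq_measure)
    finally have "(\<integral>\<omega>. \<bar>p i \<omega> - ps\<bar> \<partial>M) < r" using mA by linarith
    moreover have "(\<integral>\<omega>. \<bar>p i \<omega> - ps\<bar> \<partial>M) \<ge> 0" by simp
    ultimately show "norm ((\<integral>\<omega>. \<bar>p i \<omega> - ps\<bar> \<partial>M) - 0) < r" by simp
  qed
qed

lemma drift:
  fixes a :: "nat \<Rightarrow> real"
  assumes ab: "\<And>i. 1 \<le> i \<Longrightarrow> \<bar>a i\<bar> \<le> A"
  shows "conv_in_prob M (\<lambda>N \<omega>. (\<Sum>i=1..N. (p i \<omega> - ps) * a i) / real N) 0"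
proof -
  define e where "e i = (\<integral>\<omega>. \<bar>p i \<omega> - ps\<bar> \<partial>M)" for i
  have A0: "0 \<le> A" using ab[of 1] by simp
  have ces: "(\<lambda>N. (\<Sum>i=1..N. e i) / real N) \<longlonglongrightarrow> 0"
    by (rule cesaro0) (use e_lim in \<open>auto simp: e_def\<close>)
  have intp: "integrable M (\<lambda>\<omega>. \<bar>p i \<omega> - ps\<bar>)" if "1 \<le> i" for i
  proof (rule integrable_const_bound[where B=1])
    show "AE x in M. norm \<bar>p i x - ps\<bar> \<le> 1" using pb[OF that] ps01 by (intro AE_I2) fastforce
  qed (use p_M[OF that] in measurable)
  have Tm: "(\<lambda>\<omega>. (\<Sum>i=1..N. (p i \<omega> - ps) * a i)) \<in> borel_measurable M" for N
    by (rule borel_measurable_sum) (use p_M in measurable)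
  show ?thesis
    unfolding conv_in_prob_def
  proof (intro allI impI)
    fix \<epsilon> :: real assume eps: "\<epsilon> > 0"
    have lim: "(\<lambda>N. (A / \<epsilon>) * ((\<Sum>i=1..N. e i) / real N)) \<longlonglongrightarrow> 0"
      using tendsto_mult[OF tendsto_const ces, of "A / \<epsilon>"] by simp
    show "(\<lambda>N. measure M {\<omega> \<in> space M. \<bar>(\<Sum>i=1..N. (p i \<omega> - ps) * a i) / real N - 0\<bar> > \<epsilon>}) \<longlonglongrightarrow> 0"
    proof (rule tendsto_sandwich[OF _ _ tendsto_const lim])
      show "eventually (\<lambda>N. 0 \<le> measure M {\<omega> \<in> space M. \<bar>(\<Sum>i=1..N. (p i \<omega> - ps) * a i) / real N - 0\<bar> > \<epsilon>}) sequentially"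
        by simp
      show "eventually (\<lambda>N. measure M {\<omega> \<in> space M. \<bar>(\<Sum>i=1..N. (p i \<omega> - ps) * a i) / real N - 0\<bar> > \<epsilon>}
              \<le> (A / \<epsilon>) * ((\<Sum>i=1..N. e i) / real N)) sequentially"
        using eventually_ge_at_top[of 1]
      proof eventually_elim
        case (elim N)
        then have Np: "real N > 0" by simp
        let ?T = "\<lambda>\<omega>. \<bar>(\<Sum>i=1..N. (p i \<omega> - ps) * a i) / real N\<bar>"
        have sub: "{\<omega> \<in> space M. \<bar>(\<Sum>i=1..N. (p i \<omega> - ps) * a i) / real N - 0\<bar> > \<epsilon>}
            \<subseteq> {\<omega> \<in> space M. ?T \<omega> \<ge> \<epsilon>}" by auto
        have bnd: "?T \<omega> \<le> (\<Sum>i=1..N. \<bar>p i \<omega> - ps\<bar> * A) / real N" if w: "\<omega> \<in> space M" for \<omega>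
        proof -
          have "\<bar>\<Sum>i=1..N. (p i \<omega> - ps) * a i\<bar> \<le> (\<Sum>i=1..N. \<bar>(p i \<omega> - ps) * a i\<bar>)" by (rule sum_abs)
          also have "\<dots> \<le> (\<Sum>i=1..N. \<bar>p i \<omega> - ps\<bar> * A)"
            by (intro sum_mono) (auto simp: abs_mult intro!: mult_left_mono ab)
          finally show ?thesis using Np by (simp add: divide_right_mono)
        qed
        have intB: "integrable M (\<lambda>\<omega>. (\<Sum>i=1..N. \<bar>p i \<omega> - ps\<bar> * A) / real N)"
          by (intro integrable_divide Bochner_Integration.integrable_sum integrable_mult_left) (auto intro!: intp)
        have intT: "integrable M ?T"
        proof (rule Bochner_Integration.integrable_bound[OF intB])
          show "?T \<in> borel_measurable M" using Tm[of N] by measurable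
          show "AE x in M. norm (?T x) \<le> norm ((\<Sum>i=1..N. \<bar>p i x - ps\<bar> * A) / real N)"
          proof (intro AE_I2)
            fix x assume x: "x \<in> space M"
            have nn: "0 \<le> (\<Sum>i=1..N. \<bar>p i x - ps\<bar> * A)" by (intro sum_nonneg) (simp add: A0)
            show "norm (?T x) \<le> norm ((\<Sum>i=1..N. \<bar>p i x - ps\<bar> * A) / real N)"
              using bnd[OF x] nn by simp
          qed
        qed
        have "measure M {\<omega> \<in> space M. \<bar>(\<Sum>i=1..N. (p i \<omega> - ps) * a i) / real N - 0\<bar> > \<epsilon>}
            \<le> measure M {\<omega> \<in> space M. ?T \<omega> \<ge> \<epsilon>}"
          by (rule finite_measure_mono[OF sub]) (use Tm[of N] in measurable)
        also have "\<dots> \<le> (\<integral>\<omega>. ?T \<omega> \<partial>M) / \<epsilon>"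
          by (rule integral_Markov_inequality_measure[OF intT, where A="space M"]) (use eps in auto)
        also have "\<dots> \<le> (\<integral>\<omega>. (\<Sum>i=1..N. \<bar>p i \<omega> - ps\<bar> * A) / real N \<partial>M) / \<epsilon>"
          by (intro divide_right_mono integral_mono[OF intT intB] bnd) (use eps in auto)
        also have "(\<integral>\<omega>. (\<Sum>i=1..N. \<bar>p i \<omega> - ps\<bar> * A) / real N \<partial>M) = (\<Sum>i=1..N. e i * A) / real N"
          unfolding e_def
          by (subst integral_divide_zero, subst Bochner_Integration.integral_sum) (auto intro!: intp)
        also have "(\<Sum>i=1..N. e i * A) / real N / \<epsilon> = (A / \<epsilon>) * ((\<Sum>i=1..N. e i) / real N)"
          by (simp add: sum_distrib_right[symmetric] sum_distrib_left[symmetric] ac_simps)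
        finally show ?case .
      qed
    qed
  qed
qed


lemma Kf_M: "1 \<le> i \<Longrightarrow> (\<lambda>\<omega>. f (K i \<omega>) :: real) \<in> borel_measurable M"
  by (rule measurable_compose[OF Kmeas]) simp_all

lemma indavg:
  fixes a :: "nat \<Rightarrow> real"
  assumes ab: "\<And>i. 1 \<le> i \<Longrightarrow> \<bar>a i\<bar> \<le> A"
    and al: "(\<lambda>N. (\<Sum>i=1..N. a i) / real N) \<longlonglongrightarrow> L"
  shows "conv_in_prob M (\<lambda>N \<omega>. (\<Sum>i=1..N. (if K i \<omega> then 1 else 0) * a i) / real N) (ps * L)"
proof -
  let ?X = "\<lambda>N \<omega>. (\<Sum>i=1..N. ((if K i \<omega> then 1 else 0) - p i \<omega>) * a i) / real N"
  let ?Y = "\<lambda>N \<omega>. (\<Sum>i=1..N. (p i \<omega> - ps) * a i) / real N"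
  let ?W = "\<lambda>N (\<omega>::'a). ps * ((\<Sum>i=1..N. a i) / real N)"
  have mX: "?X N \<in> borel_measurable M" for N
  proof -
    have "(\<lambda>\<omega>. \<Sum>i=1..N. ((if K i \<omega> then 1 else 0) - p i \<omega>) * a i) \<in> borel_measurable M"
      by (rule borel_measurable_sum) (use ind_M p_M in measurable)
    then show ?thesis by measurable
  qed
  have mY: "?Y N \<in> borel_measurable M" for N
  proof -
    have "(\<lambda>\<omega>. \<Sum>i=1..N. (p i \<omega> - ps) * a i) \<in> borel_measurable M"
      by (rule borel_measurable_sum) (use p_M in measurable)
    then show ?thesis by measurable
  qed
  have c1: "conv_in_prob M (\<lambda>N \<omega>. ?X N \<omega> + ?Y N \<omega>) (0 + 0)"
    by (rule cip_add[OF prob_space_axioms mX mY mart[OF ab] drift[OF ab]])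
  have c2: "conv_in_prob M ?W (ps * L)"
    by (rule cip_det) (intro tendsto_mult tendsto_const al)
  have c3': "conv_in_prob M (\<lambda>N \<omega>. (?X N \<omega> + ?Y N \<omega>) + ?W N \<omega>) ((0 + 0) + ps * L)"
    by (rule cip_add[OF prob_space_axioms _ _ c1 c2]) (use mX mY in measurable)
  have c3: "conv_in_prob M (\<lambda>N \<omega>. (?X N \<omega> + ?Y N \<omega>) + ?W N \<omega>) (ps * L)"
    using c3' by simp
  show ?thesis
  proof (rule cip_cong[OF prob_space_axioms _ c3])
    show "(\<lambda>\<omega>. (?X N \<omega> + ?Y N \<omega>) + ?W N \<omega>) \<in> borel_measurable M" for N
      using mX mY by measurable
    fix N :: nat and \<omega> assume "1 \<le> N" "\<omega> \<in> space M"
    have "(\<Sum>i=1..N. (if K i \<omega> then 1 else 0) * a i)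
        = (\<Sum>i=1..N. ((if K i \<omega> then 1 else 0) - p i \<omega>) * a i + (p i \<omega> - ps) * a i + ps * a i)"
      by (rule sum.cong) (auto simp: algebra_simps)
    also have "\<dots> = (\<Sum>i=1..N. ((if K i \<omega> then 1 else 0) - p i \<omega>) * a i) + (\<Sum>i=1..N. (p i \<omega> - ps) * a i) + ps * (\<Sum>i=1..N. a i)"
      by (simp add: sum.distrib sum_distrib_left)
    finally show "(\<Sum>i=1..N. (if K i \<omega> then 1 else 0) * a i) / real N = (?X N \<omega> + ?Y N \<omega>) + ?W N \<omega>"
      by (simp add: add_divide_distrib)
  qed
qed

end

theorem theorem2:
  fixes M :: "'a measure" and K :: "nat \<Rightarrow> 'a \<Rightarrow> bool" and p :: "nat \<Rightarrow> 'a \<Rightarrow> real"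
    and Y0 Y1 :: "nat \<Rightarrow> real" and ps \<delta> B m0sq m1sq m01 :: real
  assumes "prob_space M"
    and design: "sequential_design M K Y0 Y1 p"
    and stable: "0 < ps" "ps < 1" "conv_in_prob M p ps"
    and A_a: "0 < \<delta>" "\<delta> < 1" "\<And>i \<omega>. 1 \<le> i \<Longrightarrow> \<omega> \<in> space M \<Longrightarrow> \<delta> \<le> p i \<omega> \<and> p i \<omega> \<le> 1 - \<delta>"
    and A_b: "0 < B" "\<And>i. 1 \<le> i \<Longrightarrow> \<bar>Y0 i\<bar> \<le> B \<and> \<bar>Y1 i\<bar> \<le> B"
    and A_c: "(\<lambda>N. (\<Sum>i=1..N. (Y0 i)\<^sup>2) / real N) \<longlonglongrightarrow> m0sq"
             "(\<lambda>N. (\<Sum>i=1..N. (Y1 i)\<^sup>2) / real N) \<longlonglongrightarrow> m1sq"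
             "(\<lambda>N. (\<Sum>i=1..N. Y0 i * Y1 i) / real N) \<longlonglongrightarrow> m01"
             "m0sq > 0" "m1sq > 0"
  shows "conv_in_prob M (m0hat_sq K Y0 Y1) m0sq
       \<and> conv_in_prob M (m1hat_sq K Y0 Y1) m1sq
       \<and> conv_in_prob M (Vhat_strong K Y0 Y1 ps)
           ((sqrt m0sq * sqrt (ps / (1 - ps)) + sqrt m1sq * sqrt ((1 - ps) / ps))\<^sup>2)
       \<and> (sqrt m0sq * sqrt (ps / (1 - ps)) + sqrt m1sq * sqrt ((1 - ps) / ps))\<^sup>2
           \<ge> m0sq * (ps / (1 - ps)) + m1sq * ((1 - ps) / ps) + 2 * m01
       \<and> ((\<exists>c>0. \<forall>i\<ge>1. Y1 i = c * Y0 i) \<longrightarrow>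
            conv_in_prob M (Vhat_strong K Y0 Y1 ps)
              (m0sq * (ps / (1 - ps)) + m1sq * ((1 - ps) / ps) + 2 * m01))"
proof -
  interpret dctx M K Y0 Y1 p ps
  proof (intro dctx.intro[OF assms(1)] dctx_axioms.intro)
    show "sequential_design M K Y0 Y1 p" by fact
    show "conv_in_prob M p ps" by fact
    show "0 \<le> ps" "ps \<le> 1" using stable by auto
    fix i :: nat and \<omega> assume "1 \<le> i" "\<omega> \<in> space M"
    then show "0 \<le> p i \<omega> \<and> p i \<omega> \<le> 1" using A_a(1,2) A_a(3)[of i \<omega>] by auto
  qed
  have P: "prob_space M" by fact
  let ?I = "\<lambda>i \<omega>. (if K i \<omega> then 1 else 0 :: real)"
  have b0: "\<bar>(Y0 i)\<^sup>2\<bar> \<le> B * B" if "1 \<le> i" for i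
  proof -
    have "\<bar>Y0 i\<bar> * \<bar>Y0 i\<bar> \<le> B * B" using A_b(2)[OF that] by (intro mult_mono) auto
    then show ?thesis by (simp add: power2_eq_square abs_mult)
  qed
  have b1: "\<bar>(Y1 i)\<^sup>2\<bar> \<le> B * B" if "1 \<le> i" for i
  proof -
    have "\<bar>Y1 i\<bar> * \<bar>Y1 i\<bar> \<le> B * B" using A_b(2)[OF that] by (intro mult_mono) auto
    then show ?thesis by (simp add: power2_eq_square abs_mult)
  qed
  have one: "(\<lambda>N. (\<Sum>i=1..N. (1::real)) / real N) \<longlonglongrightarrow> 1"
    by (rule tendsto_eventually) (rule eventually_sequentiallyI[of 1], simp)
  have qa: "conv_in_prob M (\<lambda>N \<omega>. (\<Sum>i=1..N. ?I i \<omega> * (Y0 i)\<^sup>2) / real N) (ps * m0sq)"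
    by (rule indavg[OF b0 A_c(1)])
  have qb: "conv_in_prob M (\<lambda>N \<omega>. (\<Sum>i=1..N. ?I i \<omega> * (Y1 i)\<^sup>2) / real N) (ps * m1sq)"
    by (rule indavg[OF b1 A_c(2)])
  have qc: "conv_in_prob M (\<lambda>N \<omega>. (\<Sum>i=1..N. ?I i \<omega> * 1) / real N) (ps * 1)"
    by (rule indavg[OF _ one, of 1]) simp
  have msum: "\<And>(N::nat) (a :: nat \<Rightarrow> real). (\<lambda>\<omega>. \<Sum>i=1..N. ?I i \<omega> * a i) \<in> borel_measurable M"
    by (rule borel_measurable_sum) (use ind_M in measurable)
  have mqa: "(\<lambda>\<omega>. (\<Sum>i=1..N. ?I i \<omega> * (Y0 i)\<^sup>2) / real N) \<in> borel_measurable M" for N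
    using msum[of "\<lambda>i. (Y0 i)\<^sup>2" N] by measurable
  have mqb: "(\<lambda>\<omega>. (\<Sum>i=1..N. ?I i \<omega> * (Y1 i)\<^sup>2) / real N) \<in> borel_measurable M" for N
    using msum[of "\<lambda>i. (Y1 i)\<^sup>2" N] by measurable
  have mqc: "(\<lambda>\<omega>. (\<Sum>i=1..N. ?I i \<omega> * 1) / real N) \<in> borel_measurable M" for N
    using msum[of "\<lambda>i. 1" N] by measurable
  have x0: "conv_in_prob M (\<lambda>N \<omega>. (\<Sum>i=1..N. (Y0 i)\<^sup>2) / real N - (\<Sum>i=1..N. ?I i \<omega> * (Y0 i)\<^sup>2) / real N)
               ((1 - ps) * m0sq)"
    using cip_diff[OF P _ mqa cip_det[OF A_c(1)] qa] by (simp add: algebra_simps)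
  have r0: "conv_in_prob M (\<lambda>N \<omega>. 1 - (\<Sum>i=1..N. ?I i \<omega> * 1) / real N) (1 - ps)"
    using cip_diff[OF P _ mqc cip_det[OF tendsto_const] qc, of 1] by simp
  have obs1: "(if K i \<omega> then 1 else 0) * (obs K Y0 Y1 i \<omega>)\<^sup>2 = ?I i \<omega> * (Y1 i)\<^sup>2" for i \<omega>
    by (simp add: obs_def)
  have obs0: "(if K i \<omega> then 0 else 1) * (obs K Y0 Y1 i \<omega>)\<^sup>2 = (Y0 i)\<^sup>2 - ?I i \<omega> * (Y0 i)\<^sup>2" for i \<omega>
    by (simp add: obs_def)
  have N1e: "N1 K N \<omega> = (\<Sum>i=1..N. ?I i \<omega> * 1)" for N \<omega>
    by (simp add: N1_def)
  have qc': "conv_in_prob M (\<lambda>N \<omega>. (\<Sum>i=1..N. ?I i \<omega> * 1) / real N) ps"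
    using qc by (simp only: mult_1_right)
  have c1: "conv_in_prob M (m1hat_sq K Y0 Y1) m1sq"
  proof (rule cip_ratio[OF P mqb mqc qb qc' stable(1)])
    fix N :: nat and \<omega> assume N: "1 \<le> N" "\<omega> \<in> space M"
    show "m1hat_sq K Y0 Y1 N \<omega> = (\<Sum>i=1..N. ?I i \<omega> * (Y1 i)\<^sup>2) / real N * real N /
            max ((\<Sum>i=1..N. ?I i \<omega> * 1) / real N * real N) 1"
      unfolding m1hat_sq_def N1e obs1 using N by simp
  qed
  have mx0: "(\<lambda>\<omega>. (\<Sum>i=1..N. (Y0 i)\<^sup>2) / real N - (\<Sum>i=1..N. ?I i \<omega> * (Y0 i)\<^sup>2) / real N) \<in> borel_measurable M" for N
    using mqa[of N] by measurable
  have mr0: "(\<lambda>\<omega>. 1 - (\<Sum>i=1..N. ?I i \<omega> * 1) / real N) \<in> borel_measurable M" for N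
    using mqc[of N] by measurable
  have c0: "conv_in_prob M (m0hat_sq K Y0 Y1) m0sq"
  proof (rule cip_ratio[OF P mx0 mr0 x0 r0])
    show "0 < 1 - ps" using stable by simp
    fix N :: nat and \<omega> assume N: "1 \<le> N" "\<omega> \<in> space M"
    have s0: "(\<Sum>i=1..N. (if K i \<omega> then 0 else 1) * (obs K Y0 Y1 i \<omega>)\<^sup>2) = (\<Sum>i=1..N. (Y0 i)\<^sup>2) - (\<Sum>i=1..N. ?I i \<omega> * (Y0 i)\<^sup>2)"
      unfolding obs0 by (simp add: sum_subtractf)
    have n0: "N0 K N \<omega> = real N - (\<Sum>i=1..N. ?I i \<omega> * 1)"
      unfolding N0_def N1e ..
    show "m0hat_sq K Y0 Y1 N \<omega> = ((\<Sum>i=1..N. (Y0 i)\<^sup>2) / real N - (\<Sum>i=1..N. ?I i \<omega> * (Y0 i)\<^sup>2) / real N) * real N /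
            max ((1 - (\<Sum>i=1..N. ?I i \<omega> * 1) / real N) * real N) 1"
    proof -
      have e1: "((\<Sum>i=1..N. (Y0 i)\<^sup>2) / real N - (\<Sum>i=1..N. ?I i \<omega> * (Y0 i)\<^sup>2) / real N) * real N
          = (\<Sum>i=1..N. (Y0 i)\<^sup>2) - (\<Sum>i=1..N. ?I i \<omega> * (Y0 i)\<^sup>2)"
        using N by (simp add: field_simps)
      have e2: "(1 - (\<Sum>i=1..N. ?I i \<omega> * 1) / real N) * real N = real N - (\<Sum>i=1..N. ?I i \<omega> * 1)"
        using N by (simp add: field_simps)
      show ?thesis unfolding m0hat_sq_def e1 e2 n0 s0 ..
    qed
  qed
  have mm1: "m1hat_sq K Y0 Y1 N \<in> borel_measurable M" for N
  proof -
    have "m1hat_sq K Y0 Y1 N = (\<lambda>\<omega>. (\<Sum>i=1..N. ?I i \<omega> * (Y1 i)\<^sup>2) / max (\<Sum>i=1..N. ?I i \<omega> * 1) 1)"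
      unfolding m1hat_sq_def N1e obs1 ..
    then show ?thesis using msum[of "\<lambda>i. (Y1 i)\<^sup>2" N] msum[of "\<lambda>i. 1" N] by simp
  qed
  have mm0: "m0hat_sq K Y0 Y1 N \<in> borel_measurable M" for N
  proof -
    have "m0hat_sq K Y0 Y1 N = (\<lambda>\<omega>. ((\<Sum>i=1..N. (Y0 i)\<^sup>2) - (\<Sum>i=1..N. ?I i \<omega> * (Y0 i)\<^sup>2)) / max (real N - (\<Sum>i=1..N. ?I i \<omega> * 1)) 1)"
      unfolding m0hat_sq_def N0_def N1e obs0 by (simp add: sum_subtractf)
    then show ?thesis using msum[of "\<lambda>i. (Y0 i)\<^sup>2" N] msum[of "\<lambda>i. 1" N] by simp
  qed
  let ?g = "\<lambda>z::real \<times> real. (sqrt (fst z) * sqrt (ps / (1 - ps)) + sqrt (snd z) * sqrt ((1 - ps) / ps))\<^sup>2"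
  have cV: "conv_in_prob M (Vhat_strong K Y0 Y1 ps)
           ((sqrt m0sq * sqrt (ps / (1 - ps)) + sqrt m1sq * sqrt ((1 - ps) / ps))\<^sup>2)"
  proof (rule cip_comb[OF P mm0 mm1 c0 c1])
    fix \<epsilon> :: real assume e: "\<epsilon> > 0"
    have "isCont ?g (m0sq, m1sq)" by (intro continuous_intros)
    from cont_eta[OF this e] obtain \<eta> where eta: "\<eta> > 0"
      and H: "\<And>x y. \<bar>x - m0sq\<bar> \<le> \<eta> \<Longrightarrow> \<bar>y - m1sq\<bar> \<le> \<eta> \<Longrightarrow> \<bar>?g (x, y) - ?g (m0sq, m1sq)\<bar> \<le> \<epsilon>"
      by blast
    show "\<exists>\<eta>>0. eventually (\<lambda>n. \<forall>\<omega>\<in>space M.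
               \<bar>m0hat_sq K Y0 Y1 n \<omega> - m0sq\<bar> \<le> \<eta> \<longrightarrow> \<bar>m1hat_sq K Y0 Y1 n \<omega> - m1sq\<bar> \<le> \<eta> \<longrightarrow>
               \<bar>Vhat_strong K Y0 Y1 ps n \<omega> - (sqrt m0sq * sqrt (ps / (1 - ps)) + sqrt m1sq * sqrt ((1 - ps) / ps))\<^sup>2\<bar> \<le> \<epsilon>) sequentially"
      using H eta by (intro exI[of _ \<eta>] conjI always_eventually ballI impI allI) (auto simp: Vhat_strong_def)
  qed
  have cs: "m01\<^sup>2 \<le> m0sq * m1sq" by (rule cs_limit[OF A_c(1-3)])
  have ex: "(sqrt m0sq * sqrt (ps / (1 - ps)) + sqrt m1sq * sqrt ((1 - ps) / ps))\<^sup>2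
       = m0sq * (ps / (1 - ps)) + m1sq * ((1 - ps) / ps) + 2 * sqrt (m0sq * m1sq)"
    using stable A_c(4,5) by (intro expand_V) auto
  have m01le: "m01 \<le> sqrt (m0sq * m1sq)"
  proof -
    have "m01 \<le> \<bar>m01\<bar>" by simp
    also have "\<dots> = sqrt (m01\<^sup>2)" by simp
    also have "\<dots> \<le> sqrt (m0sq * m1sq)" using cs by (rule real_sqrt_le_mono)
    finally show ?thesis .
  qed
  have ineq: "(sqrt m0sq * sqrt (ps / (1 - ps)) + sqrt m1sq * sqrt ((1 - ps) / ps))\<^sup>2
           \<ge> m0sq * (ps / (1 - ps)) + m1sq * ((1 - ps) / ps) + 2 * m01"
    using ex m01le by linarith
  have last: "conv_in_prob M (Vhat_strong K Y0 Y1 ps)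
              (m0sq * (ps / (1 - ps)) + m1sq * ((1 - ps) / ps) + 2 * m01)"
    if Hc: "\<exists>c>0. \<forall>i\<ge>1. Y1 i = c * Y0 i"
  proof -
    obtain c where c: "c > 0" and cY: "\<And>i. i \<ge> 1 \<Longrightarrow> Y1 i = c * Y0 i" using Hc by blast
    have e1: "(\<lambda>N. (\<Sum>i=1..N. (Y1 i)\<^sup>2) / real N) = (\<lambda>N. c\<^sup>2 * ((\<Sum>i=1..N. (Y0 i)\<^sup>2) / real N))"
    proof
      fix N
      have "(\<Sum>i=1..N. (Y1 i)\<^sup>2) = (\<Sum>i=1..N. c\<^sup>2 * (Y0 i)\<^sup>2)"
        by (rule sum.cong) (auto simp: cY power_mult_distrib)
      then show "(\<Sum>i=1..N. (Y1 i)\<^sup>2) / real N = c\<^sup>2 * ((\<Sum>i=1..N. (Y0 i)\<^sup>2) / real N)"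
        by (simp add: sum_distrib_left[symmetric])
    qed
    have e2: "(\<lambda>N. (\<Sum>i=1..N. Y0 i * Y1 i) / real N) = (\<lambda>N. c * ((\<Sum>i=1..N. (Y0 i)\<^sup>2) / real N))"
    proof
      fix N
      have "(\<Sum>i=1..N. Y0 i * Y1 i) = (\<Sum>i=1..N. c * (Y0 i)\<^sup>2)"
        by (rule sum.cong) (auto simp: cY power2_eq_square)
      then show "(\<Sum>i=1..N. Y0 i * Y1 i) / real N = c * ((\<Sum>i=1..N. (Y0 i)\<^sup>2) / real N)"
        by (simp add: sum_distrib_left[symmetric])
    qed
    have m1v: "m1sq = c\<^sup>2 * m0sq"
      using LIMSEQ_unique[OF A_c(2)] tendsto_mult[OF tendsto_const A_c(1), of "c\<^sup>2"] e1 by simp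
    have m01v: "m01 = c * m0sq"
      using LIMSEQ_unique[OF A_c(3)] tendsto_mult[OF tendsto_const A_c(1), of c] e2 by simp
    have "sqrt (m0sq * m1sq) = c * m0sq"
    proof -
      have "m0sq * m1sq = (c * m0sq)\<^sup>2" using m1v by (simp add: power2_eq_square)
      then show ?thesis using c A_c(4) by simp
    qed
    then have "(sqrt m0sq * sqrt (ps / (1 - ps)) + sqrt m1sq * sqrt ((1 - ps) / ps))\<^sup>2
       = m0sq * (ps / (1 - ps)) + m1sq * ((1 - ps) / ps) + 2 * m01"
      using ex m01v by simp
    then show ?thesis using cV by simp
  qed
  show ?thesis using c0 c1 cV ineq last by blast
qed

end
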